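(* Let $(N_1(t))_{t\ge 0}$ be a standard Poisson process with rate $1$, let $\lambda:[0,\infty)\to(0,\infty)$ be locally integrable, $\Lambda(t)=\int_0^t\lambda(\tau)\,d\tau$ with $\Lambda(t)\to\infty$ as $t\to\infty$. Let $\alpha\in(0,1)$, let $L_\alpha$ be an $\alpha$-stable subordinator ($\mathbb{E}[e^{-uL_\alpha(t)}]=e^{-tu^\alpha}$), $Y_\alpha(t)=\inf\{u\ge0:L_\alpha(u)>t\}$, independent of $N_1$, and $N_\alpha(t)=N_1(\Lambda(Y_\alpha(t)))$. Suppose $\Lambda$ is regularly varying with index $\beta\in\mathbb{R}$, i.e. $\Lambda(xt)/\Lambda(t)\to x^\beta$ as $t\to\infty$ for every $x>0$. Then $$\frac{N_\alpha(t)}{\Lambda(t^\alpha)}\xrightarrow[t\to\infty]{d}(Y_\alpha(1))^\beta.$$ *)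

theory Defs
  imports "HOL-Probability.Probability"
begin

definition std_poisson_process :: "'a measure \<Rightarrow> (real \<Rightarrow> 'a \<Rightarrow> nat) \<Rightarrow> bool" where
  "std_poisson_process M N \<longleftrightarrow>
     (\<forall>t\<ge>0. N t \<in> measurable M (count_space UNIV)) \<and>
     (\<forall>\<omega>\<in>space M. N 0 \<omega> = 0) \<and>
     (\<forall>\<omega>\<in>space M. mono_on {0..} (\<lambda>t. N t \<omega>)) \<and>
     (\<forall>\<omega>\<in>space M. \<forall>t\<ge>0. eventually (\<lambda>s. N s \<omega> = N t \<omega>) (at_right t)) \<and>
     (\<forall>(n::nat) (ts::nat \<Rightarrow> real). 0 \<le> ts 0 \<and> strict_mono ts \<longrightarrow>
        prob_space.indep_vars M (\<lambda>_. count_space UNIV)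
          (\<lambda>i \<omega>. N (ts (Suc i)) \<omega> - N (ts i) \<omega>) {..<n}) \<and>
     (\<forall>s t k. 0 \<le> s \<and> s \<le> t \<longrightarrow>
        measure M {\<omega>\<in>space M. N t \<omega> - N s \<omega> = k} = exp (-(t - s)) * (t - s) ^ k / fact k)"

definition stable_subordinator :: "'a measure \<Rightarrow> real \<Rightarrow> (real \<Rightarrow> 'a \<Rightarrow> real) \<Rightarrow> bool" where
  "stable_subordinator M \<alpha> L \<longleftrightarrow>
     (\<forall>t\<ge>0. L t \<in> borel_measurable M) \<and>
     (\<forall>\<omega>\<in>space M. L 0 \<omega> = 0) \<and>
     (\<forall>\<omega>\<in>space M. mono_on {0..} (\<lambda>t. L t \<omega>)) \<and>
     (\<forall>\<omega>\<in>space M. \<forall>t\<ge>0. continuous (at_right t) (\<lambda>s. L s \<omega>)) \<and>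
     (\<forall>(n::nat) (ts::nat \<Rightarrow> real). 0 \<le> ts 0 \<and> strict_mono ts \<longrightarrow>
        prob_space.indep_vars M (\<lambda>_. borel)
          (\<lambda>i \<omega>. L (ts (Suc i)) \<omega> - L (ts i) \<omega>) {..<n}) \<and>
     (\<forall>s t. 0 \<le> s \<and> s \<le> t \<longrightarrow>
        distr M borel (\<lambda>\<omega>. L t \<omega> - L s \<omega>) = distr M borel (L (t - s))) \<and>
     (\<forall>t u. 0 \<le> t \<and> 0 \<le> u \<longrightarrow>
        (\<integral>\<omega>. exp (- u * L t \<omega>) \<partial>M) = exp (- t * u powr \<alpha>))"

definition conv_distr_at_top :: "'a measure \<Rightarrow> (real \<Rightarrow> 'a \<Rightarrow> real) \<Rightarrow> ('a \<Rightarrow> real) \<Rightarrow> bool" where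
  "conv_distr_at_top M X Y \<longleftrightarrow>
     (\<forall>f::real \<Rightarrow> real. continuous_on UNIV f \<and> bounded (range f) \<longrightarrow>
        ((\<lambda>t. \<integral>\<omega>. f (X t \<omega>) \<partial>M) \<longlongrightarrow> (\<integral>\<omega>. f (Y \<omega>) \<partial>M)) at_top)"

end

theory Submission
  imports Defs
begin

lemma poisson_sums:
  fixes s :: real
  shows "(\<lambda>k. exp (- s) * s ^ k / fact k) sums 1"
    and "(\<lambda>k. real k * (exp (- s) * s ^ k / fact k)) sums s"
    and "(\<lambda>k. real k * (real k - 1) * (exp (- s) * s ^ k / fact k)) sums s^2"
proof -
  have e: "(\<lambda>k. s ^ k / fact k) sums exp s"
    using exp_converges[of s] by (simp add: divide_inverse_commute scaleR_conv_of_real)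
  have e0: "(\<lambda>k. exp (- s) * (s ^ k / fact k)) sums (exp (- s) * exp s)"
    by (rule sums_mult[OF e])
  then show "(\<lambda>k. exp (- s) * s ^ k / fact k) sums 1"
    using exp_minus_inverse[of s] by (simp add: mult.commute)
  have e1: "(\<lambda>k. s * (exp (- s) * (s ^ k / fact k))) sums (s * 1)"
    by (rule sums_mult) (use e0 in \<open>simp add: exp_minus\<close>)
  have "(\<lambda>k. real (Suc k) * (exp (- s) * s ^ (Suc k) / fact (Suc k))) = (\<lambda>k. s * (exp (- s) * (s ^ k / fact k)))"
    by (rule ext) (simp add: fact_Suc del: of_nat_Suc)
  with e1 have "(\<lambda>k. real (Suc k) * (exp (- s) * s ^ (Suc k) / fact (Suc k))) sums s" by simp
  then show "(\<lambda>k. real k * (exp (- s) * s ^ k / fact k)) sums s"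
    using sums_Suc_iff[where f="\<lambda>k. real k * (exp (- s) * s ^ k / fact k)"] by simp
  have e2: "(\<lambda>k. s^2 * (exp (- s) * (s ^ k / fact k))) sums (s^2 * 1)"
    by (rule sums_mult) (use e0 in \<open>simp add: exp_minus\<close>)
  have "(\<lambda>k. real (Suc (Suc k)) * (real (Suc (Suc k)) - 1) * (exp (- s) * s ^ (Suc (Suc k)) / fact (Suc (Suc k))))
     = (\<lambda>k. s^2 * (exp (- s) * (s ^ k / fact k)))"
  proof (rule ext)
    fix k
    have h: "real (Suc (Suc k)) - 1 = real (Suc k)" by simp
    show "real (Suc (Suc k)) * (real (Suc (Suc k)) - 1) * (exp (- s) * s ^ (Suc (Suc k)) / fact (Suc (Suc k)))
     = s^2 * (exp (- s) * (s ^ k / fact k))"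
      unfolding h by (simp add: fact_Suc power2_eq_square del: of_nat_Suc)
  qed
  with e2 have "(\<lambda>k. real (Suc (Suc k)) * (real (Suc (Suc k)) - 1) * (exp (- s) * s ^ (Suc (Suc k)) / fact (Suc (Suc k)))) sums s^2"
    by simp
  then have "(\<lambda>k. real (Suc k) * (real (Suc k) - 1) * (exp (- s) * s ^ (Suc k) / fact (Suc k))) sums s^2"
    using sums_Suc_iff[where f="\<lambda>k. real (Suc k) * (real (Suc k) - 1) * (exp (- s) * s ^ (Suc k) / fact (Suc k))"] by simp
  then show "(\<lambda>k. real k * (real k - 1) * (exp (- s) * s ^ k / fact k)) sums s^2"
    using sums_Suc_iff[where f="\<lambda>k. real k * (real k - 1) * (exp (- s) * s ^ k / fact k)"] by simp
qed

lemma poisson_var_sums: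
  fixes s :: real
  shows "(\<lambda>k. (real k - s)^2 * (exp (- s) * s ^ k / fact k)) sums s"
proof -
  note S = poisson_sums[of s]
  have "(\<lambda>k. real k * (real k - 1) * (exp (- s) * s ^ k / fact k) + (1 - 2 * s) * (real k * (exp (- s) * s ^ k / fact k))
        + s^2 * (exp (- s) * s ^ k / fact k)) sums (s^2 + (1 - 2 * s) * s + s^2 * 1)"
    by (intro sums_add sums_mult S)
  moreover have "s^2 + (1 - 2 * s) * s + s^2 * 1 = s" by (simp add: algebra_simps power2_eq_square)
  moreover have "(\<lambda>k. real k * (real k - 1) * (exp (- s) * s ^ k / fact k) + (1 - 2 * s) * (real k * (exp (- s) * s ^ k / fact k))
        + s^2 * (exp (- s) * s ^ k / fact k)) = (\<lambda>k. (real k - s)^2 * (exp (- s) * s ^ k / fact k))"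
  proof (rule ext)
    fix k
    have eq: "\<And>x p :: real. x * (x - 1) * p + (1 - 2 * s) * (x * p) + s^2 * p = (x - s)^2 * p"
      by (simp add: algebra_simps power2_eq_square)
    show "real k * (real k - 1) * (exp (- s) * s ^ k / fact k) + (1 - 2 * s) * (real k * (exp (- s) * s ^ k / fact k))
        + s^2 * (exp (- s) * s ^ k / fact k) = (real k - s)^2 * (exp (- s) * s ^ k / fact k)"
      by (rule eq)
  qed
  ultimately show ?thesis by simp
qed

lemma poisson_emeasure:
  assumes M: "prob_space M" and P: "std_poisson_process M N" and s: "0 \<le> s"
  shows "emeasure M {\<omega>\<in>space M. N s \<omega> = k} = ennreal (exp (- s) * s ^ k / fact k)"
proof -
  interpret prob_space M by fact
  have m: "N s \<in> measurable M (count_space UNIV)" using P s by (simp add: std_poisson_process_def)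
  have z: "\<And>\<omega>. \<omega> \<in> space M \<Longrightarrow> N 0 \<omega> = 0" using P by (simp add: std_poisson_process_def)
  have "measure M {\<omega>\<in>space M. N s \<omega> - N 0 \<omega> = k} = exp (-(s - 0)) * (s - 0) ^ k / fact k"
    using P s unfolding std_poisson_process_def by blast
  moreover have "{\<omega>\<in>space M. N s \<omega> - N 0 \<omega> = k} = {\<omega>\<in>space M. N s \<omega> = k}" using z by auto
  ultimately have "measure M {\<omega>\<in>space M. N s \<omega> = k} = exp (- s) * s ^ k / fact k" by simp
  moreover have "{\<omega>\<in>space M. N s \<omega> = k} \<in> sets M" using m by measurable
  ultimately show ?thesis by (simp add: emeasure_eq_measure)
qed

lemma poisson_second_moment:
  assumes M: "prob_space M" and P: "std_poisson_process M N" and s: "0 \<le> s"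
  shows "(\<integral>\<^sup>+\<omega>. ennreal ((real (N s \<omega>) - s)^2) \<partial>M) = ennreal s"
proof -
  interpret prob_space M by fact
  have m[measurable]: "N s \<in> measurable M (count_space UNIV)" using P s by (simp add: std_poisson_process_def)
  have pw: "ennreal ((real (N s \<omega>) - s)^2) = (\<Sum>k. ennreal ((real k - s)^2) * indicator {\<omega>\<in>space M. N s \<omega> = k} \<omega>)"
    if "\<omega> \<in> space M" for \<omega>
  proof -
    have "(\<lambda>k. if k = N s \<omega> then ennreal ((real k - s)^2) else 0) sums ennreal ((real (N s \<omega>) - s)^2)"
      by (rule sums_single[where f="\<lambda>k. ennreal ((real k - s)^2)", simplified])
    moreover have "(\<lambda>k. if k = N s \<omega> then ennreal ((real k - s)^2) else 0)
       = (\<lambda>k. ennreal ((real k - s)^2) * indicator {\<omega>\<in>space M. N s \<omega> = k} \<omega>)"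
      using that by (auto simp: indicator_def)
    ultimately show ?thesis by (simp add: sums_iff)
  qed
  have "(\<integral>\<^sup>+\<omega>. ennreal ((real (N s \<omega>) - s)^2) \<partial>M)
      = (\<integral>\<^sup>+\<omega>. (\<Sum>k. ennreal ((real k - s)^2) * indicator {\<omega>\<in>space M. N s \<omega> = k} \<omega>) \<partial>M)"
    by (rule nn_integral_cong) (simp add: pw)
  also have "\<dots> = (\<Sum>k. (\<integral>\<^sup>+\<omega>. ennreal ((real k - s)^2) * indicator {\<omega>\<in>space M. N s \<omega> = k} \<omega> \<partial>M))"
    by (rule nn_integral_suminf) measurable
  also have "\<dots> = (\<Sum>k. ennreal ((real k - s)^2 * (exp (- s) * s ^ k / fact k)))"
  proof (rule suminf_cong)
    fix k
    have "{\<omega>\<in>space M. N s \<omega> = k} \<in> sets M" by measurable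
    then show "(\<integral>\<^sup>+\<omega>. ennreal ((real k - s)^2) * indicator {\<omega>\<in>space M. N s \<omega> = k} \<omega> \<partial>M)
        = ennreal ((real k - s)^2 * (exp (- s) * s ^ k / fact k))"
      using poisson_emeasure[OF M P s, of k] by (simp add: nn_integral_cmult_indicator ennreal_mult'[symmetric] mult.assoc)
  qed
  also have "\<dots> = ennreal s"
    by (rule suminf_ennreal_eq[OF _ poisson_var_sums]) (use s in auto)
  finally show ?thesis .
qed

lemma poisson_chebyshev:
  assumes M: "prob_space M" and P: "std_poisson_process M N" and s: "0 \<le> s" and r: "0 < r"
  shows "measure M {\<omega>\<in>space M. r \<le> \<bar>real (N s \<omega>) - s\<bar>} \<le> s / r^2"
proof -
  interpret prob_space M by fact
  have m[measurable]: "N s \<in> measurable M (count_space UNIV)" using P s by (simp add: std_poisson_process_def)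
  have "emeasure M {\<omega>\<in>space M. 1 \<le> ennreal (1 / r^2) * ennreal ((real (N s \<omega>) - s)^2)}
      \<le> ennreal (1 / r^2) * (\<integral>\<^sup>+\<omega>. ennreal ((real (N s \<omega>) - s)^2) * indicator (space M) \<omega> \<partial>M)"
    by (rule nn_integral_Markov_inequality) measurable
  also have "(\<integral>\<^sup>+\<omega>. ennreal ((real (N s \<omega>) - s)^2) * indicator (space M) \<omega> \<partial>M)
      = (\<integral>\<^sup>+\<omega>. ennreal ((real (N s \<omega>) - s)^2) \<partial>M)"
    by (rule nn_integral_cong) auto
  also have "\<dots> = ennreal s" by (rule poisson_second_moment[OF M P s])
  also have "{\<omega>\<in>space M. 1 \<le> ennreal (1 / r^2) * ennreal ((real (N s \<omega>) - s)^2)}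
      = {\<omega>\<in>space M. r \<le> \<bar>real (N s \<omega>) - s\<bar>}"
  proof -
    have "(1 \<le> ennreal (1 / r^2) * ennreal ((x - s)^2)) = (r \<le> \<bar>x - s\<bar>)" for x :: real
    proof -
      have "ennreal (1 / r^2) * ennreal ((x - s)^2) = ennreal ((x - s)^2 / r^2)"
        by (simp add: ennreal_mult[symmetric])
      moreover have "(1 \<le> (x - s)^2 / r^2) = (r^2 \<le> (x - s)^2)" using r by (simp add: field_simps)
      moreover have "(r^2 \<le> (x - s)^2) = (r \<le> \<bar>x - s\<bar>)"
        using r by (metis abs_le_square_iff abs_of_pos)
      ultimately show ?thesis by (simp add: ennreal_ge_1)
    qed
    then show ?thesis by simp
  qed
  finally have "emeasure M {\<omega>\<in>space M. r \<le> \<bar>real (N s \<omega>) - s\<bar>} \<le> ennreal (1 / r^2) * ennreal s" .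
  then have "emeasure M {\<omega>\<in>space M. r \<le> \<bar>real (N s \<omega>) - s\<bar>} \<le> ennreal (s / r^2)"
    using s by (simp add: ennreal_mult[symmetric])
  then have "ennreal (measure M {\<omega>\<in>space M. r \<le> \<bar>real (N s \<omega>) - s\<bar>}) \<le> ennreal (s / r^2)"
    by (simp add: emeasure_eq_measure)
  then show ?thesis
    using s r by (subst (asm) ennreal_le_iff) auto
qed

lemma laplace_poly:
  fixes X X' :: "'a \<Rightarrow> real"
  assumes M: "prob_space M"
    and X: "X \<in> borel_measurable M" and X': "X' \<in> borel_measurable M"
    and Xp: "\<And>\<omega>. \<omega> \<in> space M \<Longrightarrow> 0 \<le> X \<omega>"
    and X'p: "\<And>\<omega>. \<omega> \<in> space M \<Longrightarrow> 0 \<le> X' \<omega>"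
    and lap: "\<And>u. 0 \<le> u \<Longrightarrow> (\<integral>\<omega>. exp (- u * X \<omega>) \<partial>M) = (\<integral>\<omega>. exp (- u * X' \<omega>) \<partial>M)"
  shows "(\<integral>\<omega>. (\<Sum>i\<le>n. a i * exp (- X \<omega>) ^ i) \<partial>M) = (\<integral>\<omega>. (\<Sum>i\<le>n. a i * exp (- X' \<omega>) ^ i) \<partial>M)"
proof -
  interpret prob_space M by fact
  have pw: "exp (- Z) ^ i = exp (- real i * Z)" for Z :: real and i
    by (metis exp_of_nat_mult mult_minus_left mult_minus_right)
  have int: "integrable M (\<lambda>\<omega>. exp (- real i * Z \<omega>))"
    if Z: "Z \<in> borel_measurable M" and Zp: "\<And>\<omega>. \<omega> \<in> space M \<Longrightarrow> 0 \<le> Z \<omega>" for Z i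
  proof (rule integrable_const_bound[where B=1])
    show "AE x in M. norm (exp (- real i * Z x)) \<le> 1"
      using Zp by (auto intro!: AE_I2 simp: mult_nonneg_nonneg)
  qed (use Z in auto)
  have "(\<integral>\<omega>. (\<Sum>i\<le>n. a i * exp (- X \<omega>) ^ i) \<partial>M) = (\<Sum>i\<le>n. a i * (\<integral>\<omega>. exp (- real i * X \<omega>) \<partial>M))"
    unfolding pw by (subst Bochner_Integration.integral_sum) (auto intro!: integrable_mult_right simp: int[OF X Xp, simplified])
  also have "\<dots> = (\<Sum>i\<le>n. a i * (\<integral>\<omega>. exp (- real i * X' \<omega>) \<partial>M))"
    using lap by simp
  also have "\<dots> = (\<integral>\<omega>. (\<Sum>i\<le>n. a i * exp (- X' \<omega>) ^ i) \<partial>M)"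
    unfolding pw by (subst Bochner_Integration.integral_sum) (auto intro!: integrable_mult_right simp: int[OF X' X'p, simplified])
  finally show ?thesis .
qed

lemma laplace_cont:
  fixes X X' :: "'a \<Rightarrow> real"
  assumes M: "prob_space M"
    and X: "X \<in> borel_measurable M" and X': "X' \<in> borel_measurable M"
    and Xp: "\<And>\<omega>. \<omega> \<in> space M \<Longrightarrow> 0 \<le> X \<omega>"
    and X'p: "\<And>\<omega>. \<omega> \<in> space M \<Longrightarrow> 0 \<le> X' \<omega>"
    and lap: "\<And>u. 0 \<le> u \<Longrightarrow> (\<integral>\<omega>. exp (- u * X \<omega>) \<partial>M) = (\<integral>\<omega>. exp (- u * X' \<omega>) \<partial>M)"
    and g: "continuous_on UNIV (g :: real \<Rightarrow> real)" and gB: "\<And>y. \<bar>g y\<bar> \<le> (B::real)"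
  shows "(\<integral>\<omega>. g (exp (- X \<omega>)) \<partial>M) = (\<integral>\<omega>. g (exp (- X' \<omega>)) \<partial>M)"
proof -
  interpret prob_space M by fact
  have gm: "g \<in> borel_measurable borel" using g by (simp add: borel_measurable_continuous_onI)
  have intg: "integrable M (\<lambda>\<omega>. g (exp (- Z \<omega>)))" if Z: "Z \<in> borel_measurable M" for Z :: "'a \<Rightarrow> real"
    by (rule integrable_const_bound[where B=B]) (use gB Z gm in auto)
  have intp: "integrable M (\<lambda>\<omega>. p (exp (- Z \<omega>)))"
    if Z: "Z \<in> borel_measurable M" and Zp: "\<And>\<omega>. \<omega> \<in> space M \<Longrightarrow> 0 \<le> Z \<omega>"
      and p: "real_polynomial_function p" for Z :: "'a \<Rightarrow> real" and p :: "real \<Rightarrow> real"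
  proof -
    have pc: "continuous_on UNIV p" using p
      by (simp add: continuous_on_polymonial_function real_polynomial_function_eq)
    have "compact (p ` {0..1})" using compact_continuous_image[OF continuous_on_subset[OF pc subset_UNIV] compact_Icc[of 0 1]] by simp
    then obtain C where C: "\<And>y. y \<in> {0..1} \<Longrightarrow> norm (p y) \<le> C"
      by (meson bounded_iff compact_imp_bounded image_eqI)
    show ?thesis
    proof (rule integrable_const_bound[where B=C])
      show "AE x in M. norm (p (exp (- Z x))) \<le> C"
        using Zp by (intro AE_I2 C) auto
    next
      have "p \<in> borel_measurable borel" using pc by (simp add: borel_measurable_continuous_onI)
      then show "(\<lambda>\<omega>. p (exp (- Z \<omega>))) \<in> borel_measurable M" using Z by measurable
    qed
  qed
  have "\<bar>(\<integral>\<omega>. g (exp (- X \<omega>)) \<partial>M) - (\<integral>\<omega>. g (exp (- X' \<omega>)) \<partial>M)\<bar> \<le> 2 * e" if e: "0 < e" for e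
  proof -
    obtain p where p: "real_polynomial_function p" and pg: "\<And>y. y \<in> {0..1} \<Longrightarrow> \<bar>g y - p y\<bar> < e"
      using Stone_Weierstrass_real_polynomial_function[of "{0..1::real}" g e] e
        continuous_on_subset[OF g] compact_Icc by auto
    obtain a n where pe: "p = (\<lambda>x. \<Sum>i\<le>n. a i * x^i)" using p real_polynomial_function_iff_sum by auto
    have eqp: "(\<integral>\<omega>. p (exp (- X \<omega>)) \<partial>M) = (\<integral>\<omega>. p (exp (- X' \<omega>)) \<partial>M)"
      unfolding pe by (rule laplace_poly[OF M X X' Xp X'p lap])
    have bnd: "\<bar>(\<integral>\<omega>. g (exp (- Z \<omega>)) \<partial>M) - (\<integral>\<omega>. p (exp (- Z \<omega>)) \<partial>M)\<bar> \<le> e"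
      if Z: "Z \<in> borel_measurable M" and Zp: "\<And>\<omega>. \<omega> \<in> space M \<Longrightarrow> 0 \<le> Z \<omega>" for Z :: "'a \<Rightarrow> real"
    proof -
      have "\<bar>(\<integral>\<omega>. g (exp (- Z \<omega>)) \<partial>M) - (\<integral>\<omega>. p (exp (- Z \<omega>)) \<partial>M)\<bar>
          = \<bar>(\<integral>\<omega>. g (exp (- Z \<omega>)) - p (exp (- Z \<omega>)) \<partial>M)\<bar>"
        by (subst Bochner_Integration.integral_diff) (auto intro!: intg intp Z Zp p)
      also have "\<dots> \<le> (\<integral>\<omega>. \<bar>g (exp (- Z \<omega>)) - p (exp (- Z \<omega>))\<bar> \<partial>M)"
        by (rule integral_abs_bound)
      also have "\<dots> \<le> (\<integral>\<omega>. e \<partial>M)"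
        proof (rule integral_mono)
        show "integrable M (\<lambda>\<omega>. \<bar>g (exp (- Z \<omega>)) - p (exp (- Z \<omega>))\<bar>)"
          by (intro integrable_abs Bochner_Integration.integrable_diff intg[OF Z] intp[OF Z Zp p])
        show "\<bar>g (exp (- Z \<omega>)) - p (exp (- Z \<omega>))\<bar> \<le> e" if "\<omega> \<in> space M" for \<omega>
          by (rule less_imp_le, rule pg) (use Zp[OF that] in auto)
      qed simp
      finally show ?thesis by (simp add: prob_space)
    qed
    show ?thesis using bnd[OF X Xp] bnd[OF X' X'p] eqp by linarith
  qed
  then show ?thesis
  proof -
    have "\<bar>(\<integral>\<omega>. g (exp (- X \<omega>)) \<partial>M) - (\<integral>\<omega>. g (exp (- X' \<omega>)) \<partial>M)\<bar> \<le> 0"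
    proof (rule field_le_epsilon)
      fix e :: real assume "0 < e" then show "\<bar>(\<integral>\<omega>. g (exp (- X \<omega>)) \<partial>M) - (\<integral>\<omega>. g (exp (- X' \<omega>)) \<partial>M)\<bar> \<le> 0 + e"
        using \<open>\<And>e. 0 < e \<Longrightarrow> _\<close>[of "e/2"] by simp
    qed
    then show ?thesis by simp
  qed
qed

lemma ramp_lim:
  fixes a y :: real
  shows "(\<lambda>n. min 1 (max 0 (real n * (y - a) + 1))) \<longlonglongrightarrow> (if a \<le> y then 1 else 0)"
proof (cases "a \<le> y")
  case True
  then have "min 1 (max 0 (real n * (y - a) + 1)) = 1" for n by simp
  then show ?thesis using True by simp
next
  case False
  then have ya: "y - a < 0" by simp
  obtain N :: nat where N: "real N > 1 / (a - y)" using reals_Archimedean2 by blast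
  have "min 1 (max 0 (real n * (y - a) + 1)) = 0" if "n \<ge> N" for n
  proof -
    have "real n > 1 / (a - y)" using N that by linarith
    then have "real n * (a - y) > 1" using ya by (simp add: field_simps)
    then show ?thesis by (simp add: algebra_simps)
  qed
  then have "eventually (\<lambda>n. min 1 (max 0 (real n * (y - a) + 1)) = 0) sequentially"
    by (auto simp: eventually_sequentially)
  then show ?thesis using False by (simp add: tendsto_eventually)
qed

lemma laplace_distr:
  fixes X X' :: "'a \<Rightarrow> real"
  assumes M: "prob_space M"
    and X: "X \<in> borel_measurable M" and X': "X' \<in> borel_measurable M"
    and Xp: "\<And>\<omega>. \<omega> \<in> space M \<Longrightarrow> 0 \<le> X \<omega>"
    and X'p: "\<And>\<omega>. \<omega> \<in> space M \<Longrightarrow> 0 \<le> X' \<omega>"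
    and lap: "\<And>u. 0 \<le> u \<Longrightarrow> (\<integral>\<omega>. exp (- u * X \<omega>) \<partial>M) = (\<integral>\<omega>. exp (- u * X' \<omega>) \<partial>M)"
  shows "distr M borel X = distr M borel X'"
proof -
  interpret prob_space M by fact
  have lim: "(\<lambda>n. \<integral>\<omega>. min 1 (max 0 (real n * (exp (- Z \<omega>) - exp (- c)) + 1)) \<partial>M)
      \<longlonglongrightarrow> measure M {\<omega>\<in>space M. Z \<omega> \<le> c}"
    if Z: "Z \<in> borel_measurable M" for Z :: "'a \<Rightarrow> real" and c
  proof -
    have "(\<lambda>n. \<integral>\<omega>. min 1 (max 0 (real n * (exp (- Z \<omega>) - exp (- c)) + 1)) \<partial>M)
      \<longlonglongrightarrow> (\<integral>\<omega>. indicator {\<omega>\<in>space M. Z \<omega> \<le> c} \<omega> \<partial>M)"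
    proof (rule integral_dominated_convergence[where w="\<lambda>_. 1"])
      show "AE x in M. (\<lambda>n. min 1 (max 0 (real n * (exp (- Z x) - exp (- c)) + 1)))
            \<longlonglongrightarrow> indicator {\<omega> \<in> space M. Z \<omega> \<le> c} x"
      proof (rule AE_I2)
        fix x assume x: "x \<in> space M"
        have "(exp (- c) \<le> exp (- Z x)) = (Z x \<le> c)" by simp
        then show "(\<lambda>n. min 1 (max 0 (real n * (exp (- Z x) - exp (- c)) + 1)))
            \<longlonglongrightarrow> indicator {\<omega> \<in> space M. Z \<omega> \<le> c} x"
          using ramp_lim[of "exp (- Z x)" "exp (- c)"] x by (cases "Z x \<le> c") (auto simp: indicator_def)
      qed
    qed (use Z in auto)
    also have "(\<integral>\<omega>. indicator {\<omega>\<in>space M. Z \<omega> \<le> c} \<omega> \<partial>M) = measure M {\<omega>\<in>space M. Z \<omega> \<le> c}"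
      using Z by simp
    finally show ?thesis .
  qed
  have eq: "measure M {\<omega>\<in>space M. X \<omega> \<le> c} = measure M {\<omega>\<in>space M. X' \<omega> \<le> c}" for c
  proof -
    have "(\<integral>\<omega>. min 1 (max 0 (real n * (exp (- X \<omega>) - exp (- c)) + 1)) \<partial>M)
        = (\<integral>\<omega>. min 1 (max 0 (real n * (exp (- X' \<omega>) - exp (- c)) + 1)) \<partial>M)" for n
      by (rule laplace_cont[OF M X X' Xp X'p lap, where B=1, of "\<lambda>y. min 1 (max 0 (real n * (y - exp (- c)) + 1))"])
         (auto intro!: continuous_intros)
    then show ?thesis using LIMSEQ_unique lim[OF X, of c] lim[OF X', of c] by simp
  qed
  show ?thesis
  proof (rule cdf_unique)
    show "real_distribution (distr M borel X)" using X by (rule real_distribution_distr)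
    show "real_distribution (distr M borel X')" using X' by (rule real_distribution_distr)
    show "cdf (distr M borel X) = cdf (distr M borel X')"
    proof
      fix c
      have "cdf (distr M borel X) c = measure M {\<omega>\<in>space M. X \<omega> \<le> c}"
        using X by (simp add: cdf_def measure_distr vimage_def Int_def conj_commute)
      moreover have "cdf (distr M borel X') c = measure M {\<omega>\<in>space M. X' \<omega> \<le> c}"
        using X' by (simp add: cdf_def measure_distr vimage_def Int_def conj_commute)
      ultimately show "cdf (distr M borel X) c = cdf (distr M borel X') c" using eq by simp
    qed
  qed
qed

definition yv :: "real \<Rightarrow> (real \<Rightarrow> real) \<Rightarrow> real" where
  "yv t l = real_of_ereal (INF q\<in>\<rat>. if 0 \<le> q \<and> t < l q then ereal q else \<infinity>)"

lemma yv_nonneg: "0 \<le> yv t l"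
proof -
  have "0 \<le> (INF q\<in>\<rat>. if 0 \<le> q \<and> t < l q then ereal q else \<infinity>)"
    by (rule INF_greatest) auto
  then show ?thesis unfolding yv_def by (simp add: real_of_ereal_pos)
qed

lemma yv_eq:
  assumes mono: "mono_on {0..} l" and ex: "\<exists>u\<ge>0. t < l u"
  shows "yv t l = Inf {u. 0 \<le> u \<and> t < l u}"
proof -
  define S where "S = {u. 0 \<le> u \<and> t < l u}"
  have Sne: "S \<noteq> {}" using ex by (auto simp: S_def)
  have Sbdd: "bdd_below S" by (rule bdd_belowI[of _ 0]) (auto simp: S_def)
  define a where "a = Inf S"
  have "(INF q\<in>\<rat>. if 0 \<le> q \<and> t < l q then ereal q else \<infinity>) = ereal a"
  proof (rule antisym)
    show "ereal a \<le> (INF q\<in>\<rat>. if 0 \<le> q \<and> t < l q then ereal q else \<infinity>)"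
    proof (rule INF_greatest)
      fix q :: real assume "q \<in> \<rat>"
      show "ereal a \<le> (if 0 \<le> q \<and> t < l q then ereal q else \<infinity>)"
        using cInf_lower[OF _ Sbdd, of q] by (auto simp: a_def S_def)
    qed
    show "(INF q\<in>\<rat>. if 0 \<le> q \<and> t < l q then ereal q else \<infinity>) \<le> ereal a"
    proof (rule ereal_le_epsilon2)
      fix e :: real assume e: "0 < e"
      have "Inf S < a + e/2" using e by (simp add: a_def)
      then obtain u where u: "u \<in> S" "u < a + e/2" using cInf_less_iff[OF Sne Sbdd] by auto
      obtain q where q: "q \<in> \<rat>" "u < q" "q < u + e/2" using Rats_dense_in_real[of u "u + e/2"] e by auto
      have qS: "0 \<le> q \<and> t < l q"
      proof -
        have "0 \<le> u" "t < l u" using u by (auto simp: S_def)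
        moreover have "l u \<le> l q" using mono \<open>0 \<le> u\<close> q by (intro mono_onD[OF mono]) auto
        ultimately show ?thesis using q by auto
      qed
      have "(INF q\<in>\<rat>. if 0 \<le> q \<and> t < l q then ereal q else \<infinity>) \<le> (if 0 \<le> q \<and> t < l q then ereal q else \<infinity>)"
        by (rule INF_lower) fact
      also have "\<dots> = ereal q" using qS by simp
      also have "\<dots> \<le> ereal a + ereal e" using q u by simp
      finally show "(INF q\<in>\<rat>. if 0 \<le> q \<and> t < l q then ereal q else \<infinity>) \<le> ereal a + ereal e" .
    qed
  qed
  then show ?thesis by (simp add: yv_def a_def S_def)
qed

lemma Inf_le_of_gt:
  fixes l :: "real \<Rightarrow> real"
  assumes "0 \<le> x" "t < l x"
  shows "Inf {u. 0 \<le> u \<and> t < l u} \<le> x"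
  by (rule cInf_lower) (use assms in \<open>auto intro: bdd_belowI[of _ 0]\<close>)

lemma ge_of_Inf_le:
  fixes l :: "real \<Rightarrow> real"
  assumes mono: "mono_on {0..} l" and rc: "continuous (at_right x) l" and ex: "\<exists>u\<ge>0. t < l u"
    and x: "0 \<le> x" and le: "Inf {u. 0 \<le> u \<and> t < l u} \<le> x"
  shows "t \<le> l x"
proof -
  define S where "S = {u. 0 \<le> u \<and> t < l u}"
  have Sne: "S \<noteq> {}" using ex by (auto simp: S_def)
  have Sbdd: "bdd_below S" by (rule bdd_belowI[of _ 0]) (auto simp: S_def)
  have "t \<le> l y" if "x < y" for y
  proof -
    have "Inf S < y" using le that by (simp add: S_def)
    then obtain u where u: "u \<in> S" "u < y" using cInf_less_iff[OF Sne Sbdd] by auto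
    then have "l u \<le> l y" using x that by (intro mono_onD[OF mono]) (auto simp: S_def)
    then show ?thesis using u by (auto simp: S_def)
  qed
  then have ev: "eventually (\<lambda>y. t \<le> l y) (at_right x)"
    unfolding eventually_at_right_field by (intro exI[of _ "x + 1"]) auto
  have "(l \<longlongrightarrow> l x) (at_right x)" using rc by (simp add: continuous_within)
  from tendsto_lowerbound[OF this ev] show ?thesis by simp
qed

lemma yv_measurable_pi[measurable]:
  "yv t \<in> borel_measurable (Pi\<^sub>M UNIV (\<lambda>_. borel))"
proof -
  have "(\<lambda>l. INF q\<in>\<rat>. if 0 \<le> q \<and> t < l q then ereal q else \<infinity>) \<in> borel_measurable (Pi\<^sub>M UNIV (\<lambda>_. borel))"
    by (rule borel_measurable_INF[OF countable_rat]) measurable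
  then show ?thesis unfolding yv_def[abs_def] by measurable
qed

lemma yv_measurable_process:
  assumes "\<And>u. 0 \<le> u \<Longrightarrow> L u \<in> borel_measurable M"
  shows "(\<lambda>\<omega>. yv t (\<lambda>u. L u \<omega>)) \<in> borel_measurable M"
proof -
  have "(\<lambda>\<omega>. if 0 \<le> q \<and> t < L q \<omega> then ereal q else \<infinity>) \<in> borel_measurable M" for q
  proof (cases "0 \<le> q")
    case True
    then have [measurable]: "L q \<in> borel_measurable M" by (rule assms)
    show ?thesis by measurable
  qed simp
  then have "(\<lambda>\<omega>. INF q\<in>\<rat>. if 0 \<le> q \<and> t < L q \<omega> then ereal q else \<infinity>) \<in> borel_measurable M"
    by (intro borel_measurable_INF[OF countable_rat])
  then show ?thesis unfolding yv_def by measurable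
qed

lemma cdf_squeeze_eq:
  fixes F1 F2 G H :: "real \<Rightarrow> real"
  assumes rc1: "\<And>x. continuous (at_right x) F1" and rc2: "\<And>x. continuous (at_right x) F2"
    and n1: "\<And>x. x < 0 \<Longrightarrow> F1 x = 0" and n2: "\<And>x. x < 0 \<Longrightarrow> F2 x = 0"
    and s1: "\<And>x. 0 \<le> x \<Longrightarrow> G x \<le> F1 x \<and> F1 x \<le> H x"
    and s2: "\<And>x. 0 \<le> x \<Longrightarrow> G x \<le> F2 x \<and> F2 x \<le> H x"
    and HG: "\<And>x x'. 0 \<le> x \<Longrightarrow> x < x' \<Longrightarrow> H x \<le> G x'"
  shows "F1 = F2"
proof -
  have le: "Fa x \<le> Fb x"
    if rcb: "\<And>x. continuous (at_right x) Fb"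
      and na: "\<And>x. x < 0 \<Longrightarrow> Fa x = 0" and nb: "\<And>x. x < 0 \<Longrightarrow> Fb x = 0"
      and sa: "\<And>x. 0 \<le> x \<Longrightarrow> G x \<le> Fa x \<and> Fa x \<le> H x"
      and sb: "\<And>x. 0 \<le> x \<Longrightarrow> G x \<le> Fb x \<and> Fb x \<le> H x" for Fa Fb :: "real \<Rightarrow> real" and x
  proof (cases "x < 0")
    case True then show ?thesis using na nb by simp
  next
    case False
    then have x: "0 \<le> x" by simp
    have "Fa x \<le> Fb y" if "x < y" for y
    proof -
      have "Fa x \<le> H x" using sa[OF x] by simp
      also have "\<dots> \<le> G y" using HG[OF x that] .
      also have "\<dots> \<le> Fb y" using sb[of y] x that by simp
      finally show ?thesis .
    qed
    then have ev: "eventually (\<lambda>y. Fa x \<le> Fb y) (at_right x)"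
      unfolding eventually_at_right_field by (intro exI[of _ "x + 1"]) auto
    have "(Fb \<longlongrightarrow> Fb x) (at_right x)" using rcb by (simp add: continuous_within)
    from tendsto_lowerbound[OF this ev] show ?thesis by simp
  qed
  show ?thesis
  proof
    fix x
    show "F1 x = F2 x"
      using le[of F2 F1 x, OF rc2 n1 n2 s1 s2] le[of F1 F2 x, OF rc1 n2 n1 s2 s1] by simp
  qed
qed

locale subord = prob_space M for M :: "'a measure" +
  fixes \<alpha> :: real and L :: "real \<Rightarrow> 'a \<Rightarrow> real"
  assumes alpha: "0 < \<alpha>" and SS: "stable_subordinator M \<alpha> L"
begin

lemma L_meas: "0 \<le> t \<Longrightarrow> L t \<in> borel_measurable M"
  using SS by (simp add: stable_subordinator_def)

lemma L0: "\<omega> \<in> space M \<Longrightarrow> L 0 \<omega> = 0"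
  using SS by (simp add: stable_subordinator_def)

lemma L_mono: "\<omega> \<in> space M \<Longrightarrow> mono_on {0..} (\<lambda>t. L t \<omega>)"
  using SS by (simp add: stable_subordinator_def)

lemma L_rc: "\<omega> \<in> space M \<Longrightarrow> 0 \<le> t \<Longrightarrow> continuous (at_right t) (\<lambda>s. L s \<omega>)"
  using SS by (simp add: stable_subordinator_def)

lemma L_le: "\<omega> \<in> space M \<Longrightarrow> 0 \<le> s \<Longrightarrow> s \<le> t \<Longrightarrow> L s \<omega> \<le> L t \<omega>"
  using mono_onD[OF L_mono] by simp

lemma L_nonneg: "\<omega> \<in> space M \<Longrightarrow> 0 \<le> t \<Longrightarrow> 0 \<le> L t \<omega>"
  using L_le[of \<omega> 0 t] L0 by simp

lemma L_lap: "0 \<le> t \<Longrightarrow> 0 \<le> u \<Longrightarrow> (\<integral>\<omega>. exp (- u * L t \<omega>) \<partial>M) = exp (- t * u powr \<alpha>)"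
  using SS by (simp add: stable_subordinator_def)

lemma L_scale:
  assumes s: "0 \<le> s" and c: "0 < c"
  shows "distr M borel (L (c powr \<alpha> * s)) = distr M borel (\<lambda>\<omega>. c * L s \<omega>)"
proof (rule laplace_distr)
  show "prob_space M" by (rule prob_space_axioms)
  have cs: "0 \<le> c powr \<alpha> * s" using s c by simp
  show "L (c powr \<alpha> * s) \<in> borel_measurable M" using L_meas[OF cs] .
  show "(\<lambda>\<omega>. c * L s \<omega>) \<in> borel_measurable M" using L_meas[OF s] by measurable
  show "\<And>\<omega>. \<omega> \<in> space M \<Longrightarrow> 0 \<le> L (c powr \<alpha> * s) \<omega>" using L_nonneg cs by blast
  show "\<And>\<omega>. \<omega> \<in> space M \<Longrightarrow> 0 \<le> c * L s \<omega>" using L_nonneg s c by simp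
  fix u :: real assume u: "0 \<le> u"
  have "(\<integral>\<omega>. exp (- u * (c * L s \<omega>)) \<partial>M) = (\<integral>\<omega>. exp (- (u * c) * L s \<omega>) \<partial>M)"
    by (simp add: mult.assoc)
  also have "\<dots> = exp (- s * (u * c) powr \<alpha>)" using L_lap[OF s, of "u * c"] u c by simp
  also have "\<dots> = exp (- (c powr \<alpha> * s) * u powr \<alpha>)"
    using u c by (simp add: powr_mult mult_ac)
  also have "\<dots> = (\<integral>\<omega>. exp (- u * L (c powr \<alpha> * s) \<omega>) \<partial>M)" using L_lap[OF cs u] by simp
  finally show "(\<integral>\<omega>. exp (- u * L (c powr \<alpha> * s) \<omega>) \<partial>M) = (\<integral>\<omega>. exp (- u * (c * L s \<omega>)) \<partial>M)" by simp
qed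

lemma L_scale_prob:
  assumes s: "0 \<le> s" and c: "0 < c" and B: "B \<in> sets borel"
  shows "prob {\<omega>\<in>space M. L (c powr \<alpha> * s) \<omega> \<in> B} = prob {\<omega>\<in>space M. c * L s \<omega> \<in> B}"
proof -
  have cs: "0 \<le> c powr \<alpha> * s" using s c by simp
  have m1: "L (c powr \<alpha> * s) \<in> borel_measurable M" using L_meas[OF cs] .
  have m2: "(\<lambda>\<omega>. c * L s \<omega>) \<in> borel_measurable M" using L_meas[OF s] by measurable
  have "measure (distr M borel (L (c powr \<alpha> * s))) B = measure (distr M borel (\<lambda>\<omega>. c * L s \<omega>)) B"
    using L_scale[OF s c] by simp
  then show ?thesis
    using m1 m2 B by (simp add: measure_distr vimage_def Int_def conj_commute)
qed

definition Gam :: "real \<Rightarrow> 'a set" where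
  "Gam t = {\<omega>\<in>space M. \<exists>u\<ge>0. t < L u \<omega>}"

lemma Gam_compl_eq: "space M - Gam t = {\<omega>\<in>space M. \<forall>n::nat. L (real n) \<omega> \<le> t}"
proof -
  have "(\<exists>u\<ge>0. t < L u \<omega>) \<longleftrightarrow> (\<exists>n::nat. t < L (real n) \<omega>)" if "\<omega> \<in> space M" for \<omega>
  proof
    assume "\<exists>u\<ge>0. t < L u \<omega>"
    then obtain u where u: "0 \<le> u" "t < L u \<omega>" by auto
    obtain n :: nat where n: "u \<le> real n" using real_arch_simple by blast
    have "L u \<omega> \<le> L (real n) \<omega>" using L_le[OF that u(1) n] .
    then show "\<exists>n::nat. t < L (real n) \<omega>" using u by (intro exI[of _ n]) auto
  next
    assume "\<exists>n::nat. t < L (real n) \<omega>"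
    then obtain n :: nat where "t < L (real n) \<omega>" by auto
    then show "\<exists>u\<ge>0. t < L u \<omega>" by (intro exI[of _ "real n"]) auto
  qed
  then show ?thesis unfolding Gam_def by (auto simp: not_less) (metis not_less)
qed

lemma Gam_sets: "Gam t \<in> sets M"
proof -
  have [measurable]: "\<And>n::nat. L (real n) \<in> borel_measurable M" by (rule L_meas) simp
  have "space M - Gam t \<in> sets M" unfolding Gam_compl_eq by measurable
  then have "space M - (space M - Gam t) \<in> sets M" by auto
  moreover have "space M - (space M - Gam t) = Gam t" by (auto simp: Gam_def)
  ultimately show ?thesis by simp
qed

lemma Gam_null: "space M - Gam t \<in> null_sets M"
proof -
  have [measurable]: "\<And>n::nat. L (real n) \<in> borel_measurable M" by (rule L_meas) simp
  have S: "space M - Gam t \<in> sets M" using Gam_sets by auto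
  have bnd: "prob (space M - Gam t) \<le> exp (t - real n)" for n :: nat
  proof -
    have "prob (space M - Gam t) \<le> prob {\<omega>\<in>space M. exp (- t) \<le> exp (- L (real n) \<omega>)}"
      by (rule finite_measure_mono) (auto simp: Gam_compl_eq)
    also have "\<dots> \<le> (\<integral>\<omega>. exp (- L (real n) \<omega>) \<partial>M) / exp (- t)"
    proof (rule integral_Markov_inequality_measure[where A="space M"])
      show "integrable M (\<lambda>\<omega>. exp (- L (real n) \<omega>))"
        by (rule integrable_const_bound[where B=1]) (auto intro!: AE_I2 simp: L_nonneg)
    qed auto
    also have "(\<integral>\<omega>. exp (- L (real n) \<omega>) \<partial>M) = exp (- real n)"
      using L_lap[of "real n" 1] by simp
    also have "exp (- real n) / exp (- t) = exp (t - real n)" by (simp add: exp_diff exp_minus field_simps)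
    finally show ?thesis .
  qed
  have "prob (space M - Gam t) \<le> 0"
  proof (rule field_le_epsilon)
    fix e :: real assume e: "0 < e"
    obtain n :: nat where n: "t - ln e < real n" using reals_Archimedean2 by blast
    have "exp (t - real n) < exp (ln e)" using n by simp
    then have "exp (t - real n) < e" using e by simp
    then show "prob (space M - Gam t) \<le> 0 + e" using bnd[of n] by simp
  qed
  then have "prob (space M - Gam t) = 0" using measure_nonneg[of M] by (simp add: antisym)
  then show ?thesis using S by (simp add: null_sets_def emeasure_eq_measure)
qed

lemma AE_Gam: "AE \<omega> in M. \<omega> \<in> Gam t"
proof -
  have "{\<omega>\<in>space M. \<not> \<omega> \<in> Gam t} \<in> null_sets M"
    using Gam_null[of t] by (metis (no_types, lifting) Collect_cong Diff_iff set_diff_eq)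
  then show ?thesis by (rule AE_I') auto
qed

definition Yt :: "real \<Rightarrow> 'a \<Rightarrow> real" where
  "Yt t \<omega> = yv t (\<lambda>u. L u \<omega>)"

lemma Yt_meas[measurable]: "Yt t \<in> borel_measurable M"
  unfolding Yt_def[abs_def] by (rule yv_measurable_process) (rule L_meas)

lemma Yt_nonneg: "0 \<le> Yt t \<omega>"
  by (simp add: Yt_def yv_nonneg)

lemma Yt_eq: "\<omega> \<in> Gam t \<Longrightarrow> Yt t \<omega> = Inf {u. 0 \<le> u \<and> t < L u \<omega>}"
  unfolding Yt_def Gam_def by (rule yv_eq) (auto intro: L_mono)

lemma Yt_lower: "\<omega> \<in> space M \<Longrightarrow> 0 \<le> x \<Longrightarrow> t < L x \<omega> \<Longrightarrow> Yt t \<omega> \<le> x"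
  using Yt_eq[of \<omega> t] Inf_le_of_gt[of x t "\<lambda>u. L u \<omega>"] by (force simp: Gam_def)

lemma Yt_upper: "\<omega> \<in> Gam t \<Longrightarrow> 0 \<le> x \<Longrightarrow> Yt t \<omega> \<le> x \<Longrightarrow> t \<le> L x \<omega>"
  using Yt_eq[of \<omega> t] ge_of_Inf_le[of "\<lambda>u. L u \<omega>" x t] L_mono L_rc by (auto simp: Gam_def)

lemma Yt_cdf_bounds:
  assumes x: "0 \<le> x"
  shows "prob {\<omega>\<in>space M. t < L x \<omega>} \<le> prob {\<omega>\<in>space M. Yt t \<omega> \<le> x}"
    and "prob {\<omega>\<in>space M. Yt t \<omega> \<le> x} \<le> prob {\<omega>\<in>space M. t \<le> L x \<omega>}"
proof -
  have [measurable]: "L x \<in> borel_measurable M" using L_meas[OF x] .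
  show "prob {\<omega>\<in>space M. t < L x \<omega>} \<le> prob {\<omega>\<in>space M. Yt t \<omega> \<le> x}"
    by (rule finite_measure_mono) (use Yt_lower x in auto)
  have "prob {\<omega>\<in>space M. Yt t \<omega> \<le> x} \<le> prob ({\<omega>\<in>space M. t \<le> L x \<omega>} \<union> (space M - Gam t))"
    by (rule finite_measure_mono) (use Yt_upper x Gam_sets in \<open>auto simp: Gam_def\<close>)
  also have "\<dots> = prob {\<omega>\<in>space M. t \<le> L x \<omega>}"
    by (rule measure_Un_null_set) (auto intro: Gam_null)
  finally show "prob {\<omega>\<in>space M. Yt t \<omega> \<le> x} \<le> prob {\<omega>\<in>space M. t \<le> L x \<omega>}" .
qed

end

context subord
begin

lemma cdf_distr_eq: "V \<in> borel_measurable M \<Longrightarrow> cdf (distr M borel V) x = prob {\<omega>\<in>space M. V \<omega> \<le> x}"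
  by (simp add: cdf_def measure_distr vimage_def Int_def conj_commute)

lemma Yt_scale_distr:
  assumes t: "0 < t"
  shows "distr M borel (Yt t) = distr M borel (\<lambda>\<omega>. t powr \<alpha> * Yt 1 \<omega>)"
proof (rule cdf_unique)
  have m2: "(\<lambda>\<omega>. t powr \<alpha> * Yt 1 \<omega>) \<in> borel_measurable M" by measurable
  show rd1: "real_distribution (distr M borel (Yt t))" by (rule real_distribution_distr) measurable
  show rd2: "real_distribution (distr M borel (\<lambda>\<omega>. t powr \<alpha> * Yt 1 \<omega>))" by (rule real_distribution_distr[OF m2])
  define G where "G x = prob {\<omega>\<in>space M. t < L x \<omega>}" for x
  define H where "H x = prob {\<omega>\<in>space M. t \<le> L x \<omega>}" for x
  have tp: "0 < t powr \<alpha>" using t by simp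
  show "cdf (distr M borel (Yt t)) = cdf (distr M borel (\<lambda>\<omega>. t powr \<alpha> * Yt 1 \<omega>))"
  proof (rule cdf_squeeze_eq[where G=G and H=H])
    show "continuous (at_right x) (cdf (distr M borel (Yt t)))" for x
      using rd1 by (simp add: real_distribution.finite_borel_measure_M finite_borel_measure.cdf_is_right_cont)
    show "continuous (at_right x) (cdf (distr M borel (\<lambda>\<omega>. t powr \<alpha> * Yt 1 \<omega>)))" for x
      using rd2 by (simp add: real_distribution.finite_borel_measure_M finite_borel_measure.cdf_is_right_cont)
    show "cdf (distr M borel (Yt t)) x = 0" if "x < 0" for x
    proof -
      have "\<not> Yt t \<omega> \<le> x" for \<omega> using Yt_nonneg[of t \<omega>] that by linarith
      then have E: "{\<omega>\<in>space M. Yt t \<omega> \<le> x} = {}" by blast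
      have "cdf (distr M borel (Yt t)) x = prob {\<omega>\<in>space M. Yt t \<omega> \<le> x}" by (rule cdf_distr_eq) measurable
      also have "\<dots> = 0" unfolding E by simp
      finally show ?thesis .
    qed
    show "cdf (distr M borel (\<lambda>\<omega>. t powr \<alpha> * Yt 1 \<omega>)) x = 0" if "x < 0" for x
    proof -
      have "\<not> t powr \<alpha> * Yt 1 \<omega> \<le> x" for \<omega>
        using mult_nonneg_nonneg[OF less_imp_le[OF tp] Yt_nonneg[of 1 \<omega>]] that by linarith
      then have E: "{\<omega>\<in>space M. t powr \<alpha> * Yt 1 \<omega> \<le> x} = {}" by blast
      have "cdf (distr M borel (\<lambda>\<omega>. t powr \<alpha> * Yt 1 \<omega>)) x = prob {\<omega>\<in>space M. t powr \<alpha> * Yt 1 \<omega> \<le> x}"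
        by (rule cdf_distr_eq[OF m2])
      also have "\<dots> = 0" unfolding E by simp
      finally show ?thesis .
    qed
    show "G x \<le> cdf (distr M borel (Yt t)) x \<and> cdf (distr M borel (Yt t)) x \<le> H x" if "0 \<le> x" for x
      using Yt_cdf_bounds[OF that, of t] by (simp add: cdf_distr_eq G_def H_def)
    show "G x \<le> cdf (distr M borel (\<lambda>\<omega>. t powr \<alpha> * Yt 1 \<omega>)) x \<and> cdf (distr M borel (\<lambda>\<omega>. t powr \<alpha> * Yt 1 \<omega>)) x \<le> H x"
      if x: "0 \<le> x" for x
    proof -
      define s where "s = x / t powr \<alpha>"
      have s: "0 \<le> s" using x tp by (simp add: s_def)
      have ts: "t powr \<alpha> * s = x" using tp by (simp add: s_def)
      have eqset: "{\<omega>\<in>space M. t powr \<alpha> * Yt 1 \<omega> \<le> x} = {\<omega>\<in>space M. Yt 1 \<omega> \<le> s}"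
        using tp by (auto simp: s_def field_simps)
      have "G x = prob {\<omega>\<in>space M. L (t powr \<alpha> * s) \<omega> \<in> {t<..}}" by (simp add: G_def ts)
      also have "\<dots> = prob {\<omega>\<in>space M. t * L s \<omega> \<in> {t<..}}" by (rule L_scale_prob[OF s t]) simp
      also have "\<dots> = prob {\<omega>\<in>space M. 1 < L s \<omega>}" using t by simp
      finally have G: "G x = prob {\<omega>\<in>space M. 1 < L s \<omega>}" .
      have "H x = prob {\<omega>\<in>space M. L (t powr \<alpha> * s) \<omega> \<in> {t..}}" by (simp add: H_def ts)
      also have "\<dots> = prob {\<omega>\<in>space M. t * L s \<omega> \<in> {t..}}" by (rule L_scale_prob[OF s t]) simp
      also have "\<dots> = prob {\<omega>\<in>space M. 1 \<le> L s \<omega>}" using t by simp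
      finally have H: "H x = prob {\<omega>\<in>space M. 1 \<le> L s \<omega>}" .
      show ?thesis using Yt_cdf_bounds[OF s, of 1] m2 by (simp add: cdf_distr_eq eqset G H)
    qed
    show "H x \<le> G x'" if x: "0 \<le> x" and xx: "x < x'" for x x'
    proof (cases "x = 0")
      case True
      have E: "{\<omega>\<in>space M. t \<le> L 0 \<omega>} = {}" using L0 t by auto
      have "H x = 0" unfolding H_def True E by simp
      then show ?thesis by (simp add: G_def)
    next
      case False
      then have xp: "0 < x" using x by simp
      define c where "c = (x' / x) powr (1 / \<alpha>)"
      have c1: "1 < c" unfolding c_def using xp xx alpha by (intro gr_one_powr) auto
      have cx: "c powr \<alpha> * x = x'" unfolding c_def using xp xx alpha by (simp add: powr_powr)
      have [measurable]: "L x \<in> borel_measurable M" by (rule L_meas) (use x in simp)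
      have "H x \<le> prob {\<omega>\<in>space M. t < c * L x \<omega>}"
        unfolding H_def
      proof (rule finite_measure_mono)
        show "{\<omega>\<in>space M. t \<le> L x \<omega>} \<subseteq> {\<omega>\<in>space M. t < c * L x \<omega>}"
        proof safe
          fix \<omega> assume "\<omega> \<in> space M" "t \<le> L x \<omega>"
          then have "0 < L x \<omega>" using t by simp
          then have "L x \<omega> < c * L x \<omega>" using c1 by simp
          then show "t < c * L x \<omega>" using \<open>t \<le> L x \<omega>\<close> by simp
        qed
      qed measurable
      also have "\<dots> = prob {\<omega>\<in>space M. c * L x \<omega> \<in> {t<..}}" by simp
      also have "\<dots> = prob {\<omega>\<in>space M. L (c powr \<alpha> * x) \<omega> \<in> {t<..}}"
        using c1 x by (intro L_scale_prob[symmetric]) auto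
      also have "\<dots> = G x'" by (simp add: G_def cx)
      finally show ?thesis .
    qed
  qed
qed

end

lemma indep_fubini:
  fixes H :: "'b \<times> 'b \<Rightarrow> real" and X :: "'a \<Rightarrow> 'b" and Y :: "'a \<Rightarrow> 'b"
  assumes Mp: "prob_space M" and ind: "prob_space.indep_var M S X T Y"
    and Hm: "H \<in> borel_measurable (S \<Otimes>\<^sub>M T)" and HB: "\<And>p. \<bar>H p\<bar> \<le> B"
  shows "(\<integral>\<omega>. H (X \<omega>, Y \<omega>) \<partial>M) = (\<integral>\<omega>. (\<integral>\<omega>'. H (X \<omega>', Y \<omega>) \<partial>M) \<partial>M)"
proof -
  interpret prob_space M by fact
  have Xm[measurable]: "X \<in> M \<rightarrow>\<^sub>M S" and Ym[measurable]: "Y \<in> M \<rightarrow>\<^sub>M T"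
    and prod: "distr M S X \<Otimes>\<^sub>M distr M T Y = distr M (S \<Otimes>\<^sub>M T) (\<lambda>x. (X x, Y x))"
    using ind indep_var_distribution_eq by auto
  note Hm[measurable]
  interpret PX: prob_space "distr M S X" by (rule prob_space_distr) simp
  interpret PY: prob_space "distr M T Y" by (rule prob_space_distr) simp
  interpret PXY: pair_prob_space "distr M S X" "distr M T Y" ..
  have "(\<integral>\<omega>. H (X \<omega>, Y \<omega>) \<partial>M) = integral\<^sup>L (distr M (S \<Otimes>\<^sub>M T) (\<lambda>x. (X x, Y x))) H"
    by (rule integral_distr[symmetric]) auto
  also have "\<dots> = integral\<^sup>L (distr M S X \<Otimes>\<^sub>M distr M T Y) (case_prod (\<lambda>x y. H (x, y)))"
    by (simp add: prod)
  also have "\<dots> = (\<integral>y. (\<integral>x. H (x, y) \<partial>distr M S X) \<partial>distr M T Y)"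
  proof (rule PXY.integral_snd[symmetric])
    show "integrable (distr M S X \<Otimes>\<^sub>M distr M T Y) (\<lambda>(x, y). H (x, y))"
      by (rule PXY.P.integrable_const_bound[where B=B]) (auto simp: HB)
  qed
  also have "\<dots> = (\<integral>y. (\<integral>\<omega>'. H (X \<omega>', y) \<partial>M) \<partial>distr M T Y)"
    by (rule Bochner_Integration.integral_cong) (auto intro!: integral_distr)
  also have "\<dots> = (\<integral>\<omega>. (\<integral>\<omega>'. H (X \<omega>', Y \<omega>) \<partial>M) \<partial>M)"
  proof (rule integral_distr)
    show "Y \<in> M \<rightarrow>\<^sub>M T" by simp
    have "(\<lambda>(y, \<omega>'). H (X \<omega>', y)) \<in> borel_measurable (T \<Otimes>\<^sub>M M)" by measurable
    then show "(\<lambda>y. \<integral>\<omega>'. H (X \<omega>', y) \<partial>M) \<in> borel_measurable T"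
      by (rule borel_measurable_lebesgue_integral)
  qed
  finally show ?thesis .
qed

definition nv :: "(real \<Rightarrow> real) \<Rightarrow> real \<Rightarrow> real" where
  "nv n s = real_of_ereal (INF q\<in>\<rat>. if s < q then ereal (n q) else \<infinity>)"

lemma nv_meas: "(\<lambda>p. nv (fst p) (snd p)) \<in> borel_measurable (Pi\<^sub>M UNIV (\<lambda>_. borel) \<Otimes>\<^sub>M (borel :: real measure))"
proof -
  have "(\<lambda>p. INF q\<in>\<rat>. if snd p < q then ereal (fst p q) else \<infinity>) \<in> borel_measurable (Pi\<^sub>M UNIV (\<lambda>_. borel) \<Otimes>\<^sub>M (borel :: real measure))"
    by (rule borel_measurable_INF[OF countable_rat]) measurable
  then show ?thesis unfolding nv_def by measurable
qed

lemma nv_eq: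
  fixes n :: "real \<Rightarrow> real"
  assumes mono: "mono_on {0..} n" and s: "0 \<le> s" and ev: "eventually (\<lambda>r. n r = n s) (at_right s)"
  shows "nv n s = n s"
proof -
  have "(INF q\<in>\<rat>. if s < q then ereal (n q) else \<infinity>) = ereal (n s)"
  proof (rule antisym)
    show "ereal (n s) \<le> (INF q\<in>\<rat>. if s < q then ereal (n q) else \<infinity>)"
    proof (rule INF_greatest)
      fix q :: real assume "q \<in> \<rat>"
      show "ereal (n s) \<le> (if s < q then ereal (n q) else \<infinity>)"
        using mono_onD[OF mono, of s q] s by auto
    qed
    obtain b where b: "s < b" "\<And>y. s < y \<Longrightarrow> y < b \<Longrightarrow> n y = n s"
      using ev unfolding eventually_at_right_field by auto
    obtain q where q: "q \<in> \<rat>" "s < q" "q < b" using Rats_dense_in_real[OF b(1)] by auto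
    have "(INF q\<in>\<rat>. if s < q then ereal (n q) else \<infinity>) \<le> (if s < q then ereal (n q) else \<infinity>)"
      by (rule INF_lower) fact
    also have "\<dots> = ereal (n s)" using q b by simp
    finally show "(INF q\<in>\<rat>. if s < q then ereal (n q) else \<infinity>) \<le> ereal (n s)" .
  qed
  then show ?thesis by (simp add: nv_def)
qed

lemma nv_poisson:
  assumes P: "std_poisson_process M N" and \<omega>: "\<omega> \<in> space M" and s: "0 \<le> s"
  shows "nv (\<lambda>t. real (N t \<omega>)) s = real (N s \<omega>)"
proof -
  have m: "mono_on {0..} (\<lambda>t. N t \<omega>)" and e: "eventually (\<lambda>r. N r \<omega> = N s \<omega>) (at_right s)"
    using P \<omega> s by (auto simp: std_poisson_process_def)
  have "mono_on {0..} (\<lambda>t. real (N t \<omega>))"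
    using m by (auto simp: mono_on_def)
  moreover have "eventually (\<lambda>r. real (N r \<omega>) = real (N s \<omega>)) (at_right s)"
    using e by eventually_elim simp
  ultimately show ?thesis by (rule nv_eq[OF _ s])
qed

lemma poisson_limit:
  fixes F :: "'b filter" and s c :: "'b \<Rightarrow> real" and f :: "real \<Rightarrow> real"
  assumes Mp: "prob_space M" and P: "std_poisson_process M N"
    and f: "continuous_on UNIV f" and fB: "\<And>y. \<bar>f y\<bar> \<le> B"
    and s0: "eventually (\<lambda>x. 0 \<le> s x) F"
    and c: "filterlim c at_top F"
    and sc: "((\<lambda>x. s x / c x) \<longlongrightarrow> m) F"
  shows "((\<lambda>x. \<integral>\<omega>. f (real (N (s x) \<omega>) / c x) \<partial>M) \<longlongrightarrow> f m) F"
proof (rule tendstoI)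
  interpret prob_space M by fact
  fix e :: real assume e: "0 < e"
  have B0: "0 \<le> B" using fB[of 0] by simp
  have "isCont f m" using f by (simp add: continuous_on_eq_continuous_at)
  then obtain d where d: "0 < d" and fd: "\<And>z. \<bar>z - m\<bar> < d \<Longrightarrow> \<bar>f z - f m\<bar> < e / 2"
    using e unfolding continuous_at_eps_delta dist_real_def by (metis half_gt_zero)
  define K where "K = 8 * (\<bar>m\<bar> + 1) * (2 * B + 1) / (d^2 * e)"
  have K: "0 < K" unfolding K_def using d e B0 by (intro divide_pos_pos mult_pos_pos) auto
  have ev1: "eventually (\<lambda>x. \<bar>s x / c x - m\<bar> < min (d/2) 1) F"
  proof -
    have "0 < min (d/2) (1::real)" using d by simp
    then show ?thesis using sc unfolding tendsto_iff dist_real_def by blast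
  qed
  have ev2: "eventually (\<lambda>x. K < c x) F" using c by (simp add: filterlim_at_top_dense)
  show "eventually (\<lambda>x. dist (\<integral>\<omega>. f (real (N (s x) \<omega>) / c x) \<partial>M) (f m) < e) F"
    using ev1 ev2 s0
  proof eventually_elim
    case (elim x)
    let ?s = "s x" and ?c = "c x"
    have cpos: "0 < ?c" using elim K by linarith
    have s0x: "0 \<le> ?s" using elim by simp
    have [measurable]: "N ?s \<in> measurable M (count_space UNIV)" using P s0x by (simp add: std_poisson_process_def)
    have fm: "f \<in> borel_measurable borel" using f by (simp add: borel_measurable_continuous_onI)
    have [measurable]: "(\<lambda>\<omega>. f (real (N ?s \<omega>) / ?c)) \<in> borel_measurable M" using fm by measurable
    have int1: "integrable M (\<lambda>\<omega>. f (real (N ?s \<omega>) / ?c))"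
      by (rule integrable_const_bound[where B=B]) (auto simp: fB)
    define A where "A = {\<omega>\<in>space M. ?c * d / 2 \<le> \<bar>real (N ?s \<omega>) - ?s\<bar>}"
    have A[measurable]: "A \<in> sets M" unfolding A_def by measurable
    have PA: "prob A \<le> ?s / (?c * d / 2)^2"
      unfolding A_def by (rule poisson_chebyshev[OF Mp P s0x]) (use cpos d in simp)
    have sc1: "?s / ?c \<le> \<bar>m\<bar> + 1" using elim by linarith
    have "?s / (?c * d / 2)^2 = 4 * (?s / ?c) / (?c * d^2)"
      using cpos d by (simp add: field_simps power2_eq_square)
    also have "\<dots> \<le> 4 * (\<bar>m\<bar> + 1) / (?c * d^2)"
      using sc1 cpos d by (intro divide_right_mono) auto
    also have "\<dots> \<le> 4 * (\<bar>m\<bar> + 1) / (K * d^2)"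
      using elim cpos d K by (intro divide_left_mono mult_right_mono) auto
    also have "\<dots> = e / (2 * (2 * B + 1))"
    proof -
      have a: "0 < \<bar>m\<bar> + 1" "0 < 2 * B + 1" using B0 by auto
      have "K * d^2 = 8 * (\<bar>m\<bar> + 1) * (2 * B + 1) / e" using d by (simp add: K_def)
      then have "4 * (\<bar>m\<bar> + 1) / (K * d^2) = (4 * (\<bar>m\<bar> + 1) * e) / (8 * (\<bar>m\<bar> + 1) * (2 * B + 1))"
        using e by simp
      also have "\<dots> = e / (2 * (2 * B + 1))"
      proof -
        have gen: "\<And>a b :: real. 0 < a \<Longrightarrow> 0 < b \<Longrightarrow> 4 * a * e / (8 * a * b) = e / (2 * b)"
          by (simp add: field_simps)
        show ?thesis by (rule gen[OF a])
      qed
      finally show ?thesis .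
    qed
    finally have PA': "prob A \<le> e / (2 * (2 * B + 1))" using PA by linarith
    have pw: "\<bar>f (real (N ?s \<omega>) / ?c) - f m\<bar> \<le> e / 2 + 2 * B * indicator A \<omega>" if \<omega>: "\<omega> \<in> space M" for \<omega>
    proof (cases "\<omega> \<in> A")
      case True
      have "\<bar>f (real (N ?s \<omega>) / ?c) - f m\<bar> \<le> \<bar>f (real (N ?s \<omega>) / ?c)\<bar> + \<bar>f m\<bar>" by linarith
      also have "\<dots> \<le> 2 * B" using fB[of "real (N ?s \<omega>) / ?c"] fB[of m] by linarith
      finally show ?thesis using True e by simp
    next
      case False
      then have "\<bar>real (N ?s \<omega>) - ?s\<bar> < ?c * d / 2" using \<omega> by (auto simp: A_def)
      then have "\<bar>real (N ?s \<omega>) / ?c - ?s / ?c\<bar> < d / 2"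
        using cpos by (simp add: diff_divide_distrib[symmetric] field_simps)
      then have "\<bar>real (N ?s \<omega>) / ?c - m\<bar> < d" using elim by linarith
      then have "\<bar>f (real (N ?s \<omega>) / ?c) - f m\<bar> < e / 2" by (rule fd)
      then show ?thesis using False by simp
    qed
    have "\<bar>(\<integral>\<omega>. f (real (N ?s \<omega>) / ?c) \<partial>M) - f m\<bar> = \<bar>\<integral>\<omega>. f (real (N ?s \<omega>) / ?c) - f m \<partial>M\<bar>"
      using int1 by (simp add: prob_space)
    also have "\<dots> \<le> (\<integral>\<omega>. \<bar>f (real (N ?s \<omega>) / ?c) - f m\<bar> \<partial>M)" by (rule integral_abs_bound)
    also have "\<dots> \<le> (\<integral>\<omega>. e / 2 + 2 * B * indicator A \<omega> \<partial>M)"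
    proof (rule integral_mono)
      show "integrable M (\<lambda>\<omega>. e / 2 + 2 * B * indicator A \<omega>)"
        using A by (intro Bochner_Integration.integrable_add integrable_mult_right) (auto simp: emeasure_eq_measure)
    qed (auto intro!: integrable_abs int1 pw)
    also have "\<dots> = e / 2 + 2 * B * prob A"
    proof -
      have iA: "integrable M (indicator A :: 'a \<Rightarrow> real)" using A by (simp add: emeasure_eq_measure)
      have "(\<integral>\<omega>. e / 2 + 2 * B * indicator A \<omega> \<partial>M) = (\<integral>\<omega>. e / 2 \<partial>M) + (\<integral>\<omega>. 2 * B * indicator A \<omega> \<partial>M)"
        using iA by (intro Bochner_Integration.integral_add) auto
      also have "\<dots> = e / 2 + 2 * B * prob A" using A by (simp add: prob_space)
      finally show ?thesis .
    qed
    also have "\<dots> \<le> e / 2 + 2 * B * (e / (2 * (2 * B + 1)))"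
      using PA' B0 by (intro add_left_mono mult_left_mono) auto
    also have "\<dots> < e"
    proof -
      have "2 * B * (e / (2 * (2 * B + 1))) = e / 2 * (2 * B / (2 * B + 1))" using B0 by (simp add: field_simps)
      also have "\<dots> < e / 2" using e B0 by (simp add: field_simps)
      finally show ?thesis by simp
    qed
    finally show ?case by (simp add: dist_real_def)
  qed
qed

locale mainctx = subord M \<alpha> L for M :: "'a measure" and \<alpha> L +
  fixes N1 :: "real \<Rightarrow> 'a \<Rightarrow> nat" and Y :: "real \<Rightarrow> 'a \<Rightarrow> real"
    and lam Lam :: "real \<Rightarrow> real" and \<beta> :: real
  assumes P: "std_poisson_process M N1"
    and Ydef: "\<And>t \<omega>. Y t \<omega> = Inf {u. 0 \<le> u \<and> L u \<omega> > t}"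
    and ind: "prob_space.indep_var M
           (Pi\<^sub>M UNIV (\<lambda>_. borel)) (\<lambda>\<omega> t. real (N1 t \<omega>))
           (Pi\<^sub>M UNIV (\<lambda>_. borel)) (\<lambda>\<omega> t. L t \<omega>)"
    and lam_pos: "\<And>t. 0 \<le> t \<Longrightarrow> lam t > 0"
    and lam_int: "\<And>T. 0 \<le> T \<Longrightarrow> lam integrable_on {0..T}"
    and Lam_def: "\<And>t. 0 \<le> t \<Longrightarrow> Lam t = integral {0..t} lam"
    and Lam_top: "filterlim Lam at_top at_top"
    and regvar: "\<And>x. 0 < x \<Longrightarrow> ((\<lambda>t. Lam (x * t) / Lam t) \<longlongrightarrow> x powr \<beta>) at_top"
begin

abbreviation "PI \<equiv> (Pi\<^sub>M UNIV (\<lambda>_. borel) :: (real \<Rightarrow> real) measure)"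

definition NN :: "'a \<Rightarrow> real \<Rightarrow> real" where "NN \<omega> = (\<lambda>t. real (N1 t \<omega>))"
definition LL :: "'a \<Rightarrow> real \<Rightarrow> real" where "LL \<omega> = (\<lambda>t. L t \<omega>)"

lemma NN_meas[measurable]: "NN \<in> M \<rightarrow>\<^sub>M PI"
  and LL_meas[measurable]: "LL \<in> M \<rightarrow>\<^sub>M PI"
  using ind indep_var_distribution_eq unfolding NN_def[abs_def] LL_def[abs_def] by auto

lemma ind': "indep_var PI NN PI LL"
  using ind unfolding NN_def[abs_def] LL_def[abs_def] .

lemma N1_meas: "(\<lambda>\<omega>. real (N1 k \<omega>)) \<in> borel_measurable M"
proof -
  have "(\<lambda>\<omega>. NN \<omega> k) \<in> borel_measurable M"
    using measurable_compose[OF NN_meas measurable_component_singleton[of k UNIV "\<lambda>_. borel"]] by simp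
  then show ?thesis by (simp add: NN_def)
qed

lemma Lam_nonneg:
  assumes t: "0 \<le> t" shows "0 \<le> Lam t"
proof -
  have "0 \<le> integral {0..t} lam"
  proof (rule integral_nonneg[OF lam_int[OF t]])
    fix x assume "x \<in> {0..t}"
    then show "0 \<le> lam x" using lam_pos[of x] by simp
  qed
  then show ?thesis using Lam_def[OF t] by simp
qed

lemma Lam_mono:
  assumes s: "0 \<le> s" and st: "s \<le> t" shows "Lam s \<le> Lam t"
proof -
  have t: "0 \<le> t" using s st by simp
  have "integral {0..s} lam \<le> integral {0..t} lam"
  proof (rule integral_subset_le[OF _ lam_int[OF s] lam_int[OF t]])
    show "{0..s} \<subseteq> {0..t}" using st by auto
    show "\<forall>x\<in>{0..t}. 0 \<le> lam x" using lam_pos by (auto intro: less_imp_le)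
  qed
  then show ?thesis using Lam_def[OF s] Lam_def[OF t] by simp
qed

definition Lamp :: "real \<Rightarrow> real" where "Lamp y = Lam (max 0 y)"

lemma Lamp_meas[measurable]: "Lamp \<in> borel_measurable borel"
proof (rule borel_measurable_mono)
  show "mono Lamp" unfolding mono_def Lamp_def by (auto intro!: Lam_mono)
qed

lemma Lamp_eq: "0 \<le> y \<Longrightarrow> Lamp y = Lam y"
  by (simp add: Lamp_def)

definition Gv :: "(real \<Rightarrow> real) \<Rightarrow> real \<Rightarrow> real \<Rightarrow> real" where
  "Gv f t y = (\<integral>\<omega>'. f (nv (NN \<omega>') (Lamp y) / Lam (t powr \<alpha>)) \<partial>M)"

lemma Gv_eq: "0 \<le> y \<Longrightarrow> Gv f t y = (\<integral>\<omega>'. f (real (N1 (Lam y) \<omega>') / Lam (t powr \<alpha>)) \<partial>M)"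
  unfolding Gv_def
  by (rule Bochner_Integration.integral_cong)
     (auto simp: Lamp_eq NN_def nv_poisson[OF P] Lam_nonneg)

lemma Gv_meas:
  assumes f: "f \<in> borel_measurable borel"
  shows "Gv f t \<in> borel_measurable borel"
proof -
  have m1: "(\<lambda>p. (NN (snd p), Lamp (fst p))) \<in> (borel \<Otimes>\<^sub>M M) \<rightarrow>\<^sub>M (PI \<Otimes>\<^sub>M (borel :: real measure))"
    by measurable
  have "(\<lambda>p. nv (NN (snd p)) (Lamp (fst p))) \<in> borel_measurable (borel \<Otimes>\<^sub>M M)"
    using measurable_compose[OF m1 nv_meas] by simp
  then have "(\<lambda>p. f (nv (NN (snd p)) (Lamp (fst p)) / Lam (t powr \<alpha>))) \<in> borel_measurable (borel \<Otimes>\<^sub>M M)"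
    using f by measurable
  then have "case_prod (\<lambda>y \<omega>'. f (nv (NN \<omega>') (Lamp y) / Lam (t powr \<alpha>))) \<in> borel_measurable (borel \<Otimes>\<^sub>M M)"
    by (simp add: case_prod_beta')
  then show ?thesis unfolding Gv_def[abs_def] by (rule borel_measurable_lebesgue_integral)
qed

lemma Gv_bound:
  assumes f: "f \<in> borel_measurable borel" and fB: "\<And>y. \<bar>f y\<bar> \<le> B"
  shows "\<bar>Gv f t y\<bar> \<le> B"
proof -
  have m1: "(\<lambda>\<omega>'. (NN \<omega>', Lamp y)) \<in> M \<rightarrow>\<^sub>M (PI \<Otimes>\<^sub>M (borel :: real measure))" by measurable
  have "(\<lambda>\<omega>'. nv (NN \<omega>') (Lamp y)) \<in> borel_measurable M"
    using measurable_compose[OF m1 nv_meas] by simp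
  then have m: "(\<lambda>\<omega>'. f (nv (NN \<omega>') (Lamp y) / Lam (t powr \<alpha>))) \<in> borel_measurable M"
    using f by measurable
  have "\<bar>Gv f t y\<bar> \<le> (\<integral>\<omega>'. \<bar>f (nv (NN \<omega>') (Lamp y) / Lam (t powr \<alpha>))\<bar> \<partial>M)"
    unfolding Gv_def by (rule integral_abs_bound)
  also have "\<dots> \<le> (\<integral>\<omega>'. B \<partial>M)"
  proof (rule integral_mono)
    show "integrable M (\<lambda>\<omega>'. \<bar>f (nv (NN \<omega>') (Lamp y) / Lam (t powr \<alpha>))\<bar>)"
      by (rule integrable_abs, rule integrable_const_bound[where B=B]) (simp_all add: fB m)
  qed (simp_all add: fB)
  also have "\<dots> = B" by (simp add: prob_space)
  finally show ?thesis .
qed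

end

context mainctx
begin

lemma key_eq:
  assumes t: "0 < t" and f: "continuous_on UNIV f" and fB: "\<And>y. \<bar>f y\<bar> \<le> B"
  shows "(\<integral>\<omega>. f (real (N1 (Lam (Y t \<omega>)) \<omega>) / Lam (t powr \<alpha>)) \<partial>M)
       = (\<integral>\<omega>. Gv f t (t powr \<alpha> * Yt 1 \<omega>) \<partial>M)"
proof -
  have fm[measurable]: "f \<in> borel_measurable borel" using f by (simp add: borel_measurable_continuous_onI)
  define c where "c = Lam (t powr \<alpha>)"
  define H where "H p = f (nv (fst p) (Lamp (yv t (snd p))) / c)" for p :: "(real \<Rightarrow> real) \<times> (real \<Rightarrow> real)"
  have m1: "(\<lambda>p. (fst p, Lamp (yv t (snd p)))) \<in> (PI \<Otimes>\<^sub>M PI) \<rightarrow>\<^sub>M (PI \<Otimes>\<^sub>M (borel :: real measure))"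
    by measurable
  have "(\<lambda>p. nv (fst p) (Lamp (yv t (snd p)))) \<in> borel_measurable (PI \<Otimes>\<^sub>M PI)"
    using measurable_compose[OF m1 nv_meas] by simp
  then have Hm[measurable]: "H \<in> borel_measurable (PI \<Otimes>\<^sub>M PI)"
    unfolding H_def[abs_def] by measurable
  have HB: "\<bar>H p\<bar> \<le> B" for p by (simp add: H_def fB)
  have N1m[measurable]: "(\<lambda>\<omega>. real (N1 k \<omega>)) \<in> borel_measurable M" for k by (rule N1_meas)
  have HNL[measurable]: "(\<lambda>\<omega>. H (NN \<omega>, LL \<omega>)) \<in> borel_measurable M" by measurable
  have pw: "f (real (N1 (Lam (Y t \<omega>)) \<omega>) / c)
      = (if \<omega> \<in> Gam t then H (NN \<omega>, LL \<omega>) else f (real (N1 (Lam (Inf {})) \<omega>) / c))"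
    if \<omega>: "\<omega> \<in> space M" for \<omega>
  proof (cases "\<omega> \<in> Gam t")
    case True
    have Y: "Y t \<omega> = Yt t \<omega>" using Yt_eq[OF True] Ydef[of t \<omega>] by simp
    have y0: "0 \<le> Yt t \<omega>" by (rule Yt_nonneg)
    have "nv (NN \<omega>) (Lamp (yv t (LL \<omega>))) = nv (NN \<omega>) (Lam (Yt t \<omega>))"
      by (simp add: Yt_def LL_def[abs_def] Lamp_eq yv_nonneg)
    also have "\<dots> = real (N1 (Lam (Yt t \<omega>)) \<omega>)"
      unfolding NN_def by (rule nv_poisson[OF P \<omega> Lam_nonneg[OF y0]])
    finally show ?thesis using True by (simp add: H_def Y)
  next
    case False
    then have E: "{u. 0 \<le> u \<and> L u \<omega> > t} = {}" using \<omega> by (auto simp: Gam_def)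
    have "Y t \<omega> = Inf {}" unfolding Ydef[of t \<omega>] E ..
    then show ?thesis using False by simp
  qed
  have Gs[measurable]: "Gam t \<in> sets M" by (rule Gam_sets)
  have "(\<integral>\<omega>. f (real (N1 (Lam (Y t \<omega>)) \<omega>) / Lam (t powr \<alpha>)) \<partial>M)
      = (\<integral>\<omega>. (if \<omega> \<in> Gam t then H (NN \<omega>, LL \<omega>) else f (real (N1 (Lam (Inf {})) \<omega>) / c)) \<partial>M)"
    unfolding c_def[symmetric] by (rule Bochner_Integration.integral_cong) (auto simp: pw)
  also have "\<dots> = (\<integral>\<omega>. H (NN \<omega>, LL \<omega>) \<partial>M)"
  proof (rule integral_cong_AE)
    show "(\<lambda>\<omega>. if \<omega> \<in> Gam t then H (NN \<omega>, LL \<omega>) else f (real (N1 (Lam (Inf {})) \<omega>) / c)) \<in> borel_measurable M"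
      by measurable
    show "AE \<omega> in M. (if \<omega> \<in> Gam t then H (NN \<omega>, LL \<omega>) else f (real (N1 (Lam (Inf {})) \<omega>) / c)) = H (NN \<omega>, LL \<omega>)"
      using AE_Gam[of t] by eventually_elim simp
  qed simp
  also have "\<dots> = (\<integral>\<omega>. (\<integral>\<omega>'. H (NN \<omega>', LL \<omega>) \<partial>M) \<partial>M)"
    by (rule indep_fubini[OF prob_space_axioms ind' Hm HB])
  also have "\<dots> = (\<integral>\<omega>. Gv f t (Yt t \<omega>) \<partial>M)"
    by (simp add: H_def Gv_def Yt_def LL_def[abs_def] c_def)
  also have "\<dots> = integral\<^sup>L (distr M borel (Yt t)) (Gv f t)"
    by (rule integral_distr[symmetric]) (auto intro: Gv_meas[OF fm])
  also have "\<dots> = integral\<^sup>L (distr M borel (\<lambda>\<omega>. t powr \<alpha> * Yt 1 \<omega>)) (Gv f t)"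
    by (simp add: Yt_scale_distr[OF t])
  also have "\<dots> = (\<integral>\<omega>. Gv f t (t powr \<alpha> * Yt 1 \<omega>) \<partial>M)"
    by (rule integral_distr) (auto intro: Gv_meas[OF fm])
  finally show ?thesis .
qed

lemma Yt1_pos: "\<omega> \<in> Gam 1 \<Longrightarrow> 0 < Yt 1 \<omega>"
proof (rule ccontr)
  assume G: "\<omega> \<in> Gam 1" and "\<not> 0 < Yt 1 \<omega>"
  then have "Yt 1 \<omega> \<le> 0" by simp
  from Yt_upper[OF G _ this] have "1 \<le> L 0 \<omega>" by simp
  moreover have "\<omega> \<in> space M" using G by (simp add: Gam_def)
  ultimately show False using L0 by simp
qed

lemma lim_main:
  assumes f: "continuous_on UNIV f" and fB: "\<And>y. \<bar>f y\<bar> \<le> B"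
  shows "((\<lambda>t. \<integral>\<omega>. Gv f t (t powr \<alpha> * Yt 1 \<omega>) \<partial>M) \<longlongrightarrow> (\<integral>\<omega>. f (Yt 1 \<omega> powr \<beta>) \<partial>M)) at_top"
proof (rule integral_dominated_convergence_at_top[where w="\<lambda>_. B"])
  have fm[measurable]: "f \<in> borel_measurable borel" using f by (simp add: borel_measurable_continuous_onI)
  have [measurable]: "Gv f t \<in> borel_measurable borel" for t by (rule Gv_meas[OF fm])
  show "(\<lambda>\<omega>. f (Yt 1 \<omega> powr \<beta>)) \<in> borel_measurable M" by measurable
  show "(\<lambda>\<omega>. Gv f t (t powr \<alpha> * Yt 1 \<omega>)) \<in> borel_measurable M" for t by measurable
  show "integrable M (\<lambda>_. B)" by simp
  show "\<forall>\<^sub>F t in at_top. AE \<omega> in M. norm (Gv f t (t powr \<alpha> * Yt 1 \<omega>)) \<le> B"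
    by (intro always_eventually allI AE_I2) (simp add: Gv_bound[OF fm fB])
  show "AE \<omega> in M. ((\<lambda>t. Gv f t (t powr \<alpha> * Yt 1 \<omega>)) \<longlongrightarrow> f (Yt 1 \<omega> powr \<beta>)) at_top"
    using AE_Gam[of 1]
  proof eventually_elim
    case (elim \<omega>)
    define y where "y = Yt 1 \<omega>"
    have y: "0 < y" using Yt1_pos[OF elim] by (simp add: y_def)
    have eq: "Gv f t (t powr \<alpha> * y) = (\<integral>\<omega>'. f (real (N1 (Lam (t powr \<alpha> * y)) \<omega>') / Lam (t powr \<alpha>)) \<partial>M)" for t
      by (rule Gv_eq) (use y in simp)
    have pa: "filterlim (\<lambda>t::real. t powr \<alpha>) at_top at_top" by (rule real_powr_at_top[OF alpha])
    have "((\<lambda>t. \<integral>\<omega>'. f (real (N1 (Lam (t powr \<alpha> * y)) \<omega>') / Lam (t powr \<alpha>)) \<partial>M) \<longlongrightarrow> f (y powr \<beta>)) at_top"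
    proof (rule poisson_limit[OF prob_space_axioms P f fB])
      show "\<forall>\<^sub>F t in at_top. 0 \<le> Lam (t powr \<alpha> * y)"
        using y by (intro always_eventually allI Lam_nonneg) simp
      show "filterlim (\<lambda>t. Lam (t powr \<alpha>)) at_top at_top"
        by (rule filterlim_compose[OF Lam_top pa])
      have "((\<lambda>t. Lam (y * t powr \<alpha>) / Lam (t powr \<alpha>)) \<longlongrightarrow> y powr \<beta>) at_top"
        by (rule filterlim_compose[OF regvar[OF y] pa])
      then show "((\<lambda>t. Lam (t powr \<alpha> * y) / Lam (t powr \<alpha>)) \<longlongrightarrow> y powr \<beta>) at_top"
        by (simp add: mult.commute)
    qed
    then show ?case unfolding y_def[symmetric] eq .
  qed
qed

end

context mainctx
begin

lemma final_switch:
  assumes f: "continuous_on UNIV f"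
  shows "(\<integral>\<omega>. f (Yt 1 \<omega> powr \<beta>) \<partial>M) = (\<integral>\<omega>. f (Y 1 \<omega> powr \<beta>) \<partial>M)"
proof -
  have fm[measurable]: "f \<in> borel_measurable borel" using f by (simp add: borel_measurable_continuous_onI)
  have Gs[measurable]: "Gam 1 \<in> sets M" by (rule Gam_sets)
  have pw: "f (Y 1 \<omega> powr \<beta>) = (if \<omega> \<in> Gam 1 then f (Yt 1 \<omega> powr \<beta>) else f (Inf {} powr \<beta>))"
    if \<omega>: "\<omega> \<in> space M" for \<omega>
  proof (cases "\<omega> \<in> Gam 1")
    case True
    then show ?thesis using Yt_eq[OF True] Ydef[of 1 \<omega>] by simp
  next
    case False
    then have E: "{u. 0 \<le> u \<and> L u \<omega> > 1} = {}" using \<omega> by (auto simp: Gam_def)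
    have "Y 1 \<omega> = Inf {}" unfolding Ydef[of 1 \<omega>] E ..
    then show ?thesis using False by simp
  qed
  have "(\<integral>\<omega>. f (Y 1 \<omega> powr \<beta>) \<partial>M) = (\<integral>\<omega>. (if \<omega> \<in> Gam 1 then f (Yt 1 \<omega> powr \<beta>) else f (Inf {} powr \<beta>)) \<partial>M)"
    by (rule Bochner_Integration.integral_cong) (auto simp: pw)
  also have "\<dots> = (\<integral>\<omega>. f (Yt 1 \<omega> powr \<beta>) \<partial>M)"
  proof (rule integral_cong_AE)
    show "(\<lambda>\<omega>. if \<omega> \<in> Gam 1 then f (Yt 1 \<omega> powr \<beta>) else f (Inf {} powr \<beta>)) \<in> borel_measurable M"
      by measurable
    show "AE \<omega> in M. (if \<omega> \<in> Gam 1 then f (Yt 1 \<omega> powr \<beta>) else f (Inf {} powr \<beta>)) = f (Yt 1 \<omega> powr \<beta>)"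
      using AE_Gam[of 1] by eventually_elim simp
  qed measurable
  finally show ?thesis by simp
qed

lemma conv_main:
  "conv_distr_at_top M (\<lambda>t \<omega>. real (N1 (Lam (Y t \<omega>)) \<omega>) / Lam (t powr \<alpha>)) (\<lambda>\<omega>. Y 1 \<omega> powr \<beta>)"
  unfolding conv_distr_at_top_def
proof (intro allI impI)
  fix f :: "real \<Rightarrow> real" assume fa: "continuous_on UNIV f \<and> bounded (range f)"
  then have f: "continuous_on UNIV f" by simp
  obtain B where B: "\<forall>x\<in>range f. norm x \<le> B" using fa bounded_iff by metis
  have fB: "\<bar>f y\<bar> \<le> B" for y using B by auto
  have lim: "((\<lambda>t. \<integral>\<omega>. Gv f t (t powr \<alpha> * Yt 1 \<omega>) \<partial>M) \<longlongrightarrow> (\<integral>\<omega>. f (Y 1 \<omega> powr \<beta>) \<partial>M)) at_top"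
    using lim_main[OF f fB] unfolding final_switch[OF f] .
  have ev: "\<forall>\<^sub>F t in at_top. (\<integral>\<omega>. f (real (N1 (Lam (Y t \<omega>)) \<omega>) / Lam (t powr \<alpha>)) \<partial>M)
      = (\<integral>\<omega>. Gv f t (t powr \<alpha> * Yt 1 \<omega>) \<partial>M)"
    using eventually_gt_at_top[of 0] by eventually_elim (rule key_eq[OF _ f fB])
  show "((\<lambda>t. \<integral>\<omega>. f (real (N1 (Lam (Y t \<omega>)) \<omega>) / Lam (t powr \<alpha>)) \<partial>M)
      \<longlongrightarrow> (\<integral>\<omega>. f (Y 1 \<omega> powr \<beta>) \<partial>M)) at_top"
    by (subst tendsto_cong[OF ev]) (rule lim)
qed

end

theorem mainTheorem4:
  fixes M :: "'a measure"
    and N1 :: "real \<Rightarrow> 'a \<Rightarrow> nat"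
    and L Y :: "real \<Rightarrow> 'a \<Rightarrow> real"
    and lam Lam :: "real \<Rightarrow> real"
    and \<alpha> \<beta> :: real
  assumes "prob_space M"
    and "std_poisson_process M N1"
    and "0 < \<alpha>" "\<alpha> < 1"
    and "stable_subordinator M \<alpha> L"
    and "\<And>t \<omega>. Y t \<omega> = Inf {u. 0 \<le> u \<and> L u \<omega> > t}"
    and "prob_space.indep_var M
           (Pi\<^sub>M UNIV (\<lambda>_. borel)) (\<lambda>\<omega> t. real (N1 t \<omega>))
           (Pi\<^sub>M UNIV (\<lambda>_. borel)) (\<lambda>\<omega> t. L t \<omega>)"
    and "\<And>t. 0 \<le> t \<Longrightarrow> lam t > 0"
    and "\<And>T. 0 \<le> T \<Longrightarrow> lam integrable_on {0..T}"
    and "\<And>t. 0 \<le> t \<Longrightarrow> Lam t = integral {0..t} lam"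
    and "filterlim Lam at_top at_top"
    and "\<And>x. 0 < x \<Longrightarrow> ((\<lambda>t. Lam (x * t) / Lam t) \<longlongrightarrow> x powr \<beta>) at_top"
  shows "conv_distr_at_top M
           (\<lambda>t \<omega>. real (N1 (Lam (Y t \<omega>)) \<omega>) / Lam (t powr \<alpha>))
           (\<lambda>\<omega>. Y 1 \<omega> powr \<beta>)"
proof -
  have "mainctx M \<alpha> L N1 Y lam Lam \<beta>"
    unfolding mainctx_def mainctx_axioms_def subord_def subord_axioms_def
    using assms by (intro conjI allI impI) blast+
  then interpret mainctx M \<alpha> L N1 Y lam Lam \<beta> .
  show ?thesis by (rule conv_main)
qed

end
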